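(* Let $\mathcal{A}=(\{1,\dots,k\},\sqsubseteq,<)$ be a finite linearly ordered poset where $<$ is the usual order of integers. Let $D_1,\dots,D_m$ be all the nonempty downsets of $(\{1,\dots,k\},\sqsubseteq)$, enumerated so that $D_1<_{\mathit{alex}}D_2<_{\mathit{alex}}\dots<_{\mathit{alex}}D_m$. Let $n\ge m$ and let $u\in W^n_m(\{0\})$ be an $m$-parameter word of length $n$ over the alphabet $\{0\}$; put $X_\alpha=u^{-1}(x_\alpha)$ for $1\le\alpha\le m$, and $a_i=\bigcup\{X_\alpha: i\in D_\alpha\}$ for $1\le i\le k$. Then the map $i\mapsto a_i$ is an embedding of $\mathcal{A}$ into the linearly ordered poset $(\mathcal{P}(\{1,\dots,n\}),\supseteq,<_{\overline{\mathit{lex}}})$; that is, it is injective, $i\sqsubseteq j\iff a_i\supseteq a_j$, and $i<j\iff a_i<_{\overline{\mathit{lex}}}a_j$.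
   Context: A downset in $(A,\sqsubseteq)$ is a set $B\subseteq A$ such that $x\in B$, $y\sqsubseteq x$ imply $y\in B$. For a finite linearly ordered set $(L,<)$ and $A,B\subseteq L$: $A<_{\mathit{alex}}B$ iff $A\subsetneq B$, or $A,B$ are $\subseteq$-incomparable and $\max(A\setminus B)<\max(B\setminus A)$; $A<_{\overline{\mathit{lex}}}B$ iff $A\supsetneq B$, or $A,B$ are incomparable and $\min(A\setminus B)<\min(B\setminus A)$. Both are linear orders on $\mathcal{P}(L)$. With variables $x_1,x_2,\dots$ disjoint from a finite alphabet $A$, an $m$-parameter word of length $n$ over $A$ is a word $w\in(A\cup\{x_1,\dots,x_m\})^n$, viewed as a map $w:\{1,\dots,n\}\to A\cup\{x_1,\dots,x_m\}$, such that each $x_1,\dots,x_m$ occurs in $w$ and $\min w^{-1}(x_i)<\min w^{-1}(x_j)$ for $1\le i<j\le m$; $W^n_m(A)$ is the set of such words. A linearly ordered poset is $(A,\sqsubseteq,<)$ with $(A,\sqsubseteq)$ a poset and $<$ a linear order extending $\sqsubseteq$; an embedding is an injection preserving and reflecting both $\sqsubseteq$ and $<$. *)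

theory Defs
  imports Main
begin

datatype 'a pletter = Let 'a | Var nat

text \<open>Positions of a word w (a list of length n) are 1..n; position i holds w ! (i - 1).
  The set of m-parameter words of length n over alphabet A.\<close>
definition param_words :: "'a set \<Rightarrow> nat \<Rightarrow> nat \<Rightarrow> 'a pletter list set" where
  "param_words A n m = {w. length w = n
     \<and> (\<forall>i\<in>{1..n}. w ! (i - 1) \<in> Let ` A \<union> Var ` {1..m})
     \<and> (\<forall>\<alpha>\<in>{1..m}. \<exists>i\<in>{1..n}. w ! (i - 1) = Var \<alpha>)
     \<and> (\<forall>\<alpha> \<beta>. 1 \<le> \<alpha> \<and> \<alpha> < \<beta> \<and> \<beta> \<le> m \<longrightarrow>
          Min {i\<in>{1..n}. w ! (i - 1) = Var \<alpha>} < Min {i\<in>{1..n}. w ! (i - 1) = Var \<beta>})}"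

definition var_positions :: "'a pletter list \<Rightarrow> nat \<Rightarrow> nat set" where
  "var_positions w \<alpha> = {i\<in>{1..length w}. w ! (i - 1) = Var \<alpha>}"

definition alex_less :: "nat set \<Rightarrow> nat set \<Rightarrow> bool" where
  "alex_less A B \<longleftrightarrow> A \<subset> B \<or>
     (\<not> A \<subseteq> B \<and> \<not> B \<subseteq> A \<and> Max (A - B) < Max (B - A))"

definition colex_bar_less :: "nat set \<Rightarrow> nat set \<Rightarrow> bool" where
  "colex_bar_less A B \<longleftrightarrow> A \<supset> B \<or>
     (\<not> A \<subseteq> B \<and> \<not> B \<subseteq> A \<and> Min (A - B) < Min (B - A))"

definition poset_on :: "'a set \<Rightarrow> ('a \<Rightarrow> 'a \<Rightarrow> bool) \<Rightarrow> bool" where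
  "poset_on S le \<longleftrightarrow> (\<forall>x\<in>S. le x x)
     \<and> (\<forall>x\<in>S. \<forall>y\<in>S. le x y \<and> le y x \<longrightarrow> x = y)
     \<and> (\<forall>x\<in>S. \<forall>y\<in>S. \<forall>z\<in>S. le x y \<and> le y z \<longrightarrow> le x z)"

definition downset :: "'a set \<Rightarrow> ('a \<Rightarrow> 'a \<Rightarrow> bool) \<Rightarrow> 'a set \<Rightarrow> bool" where
  "downset S le B \<longleftrightarrow> B \<subseteq> S \<and> (\<forall>x\<in>B. \<forall>y\<in>S. le y x \<longrightarrow> y \<in> B)"

end

theory Submission
  imports Defs
begin

lemma colex_asym: "colex_bar_less A B \<Longrightarrow> \<not> colex_bar_less B A"
  unfolding colex_bar_less_def by auto

lemma alex_asym: "alex_less A B \<Longrightarrow> \<not> alex_less B A"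
  unfolding alex_less_def by auto

theorem mainTheorem4:
  fixes k m n :: nat and le :: "nat \<Rightarrow> nat \<Rightarrow> bool"
    and D :: "nat \<Rightarrow> nat set" and u :: "nat pletter list"
  assumes poset: "poset_on {1..k} le"
    and linext: "\<forall>i\<in>{1..k}. \<forall>j\<in>{1..k}. le i j \<longrightarrow> i \<le> j"
    and enum: "bij_betw D {1..m} {B. downset {1..k} le B \<and> B \<noteq> {}}"
    and sorted: "\<forall>\<alpha>\<in>{1..m}. \<forall>\<beta>\<in>{1..m}. \<alpha> < \<beta> \<longrightarrow> alex_less (D \<alpha>) (D \<beta>)"
    and nm: "n \<ge> m"
    and u: "u \<in> param_words {0} n m"
  defines "a \<equiv> \<lambda>i. \<Union> {var_positions u \<alpha> | \<alpha>. \<alpha> \<in> {1..m} \<and> i \<in> D \<alpha>}"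
  shows "inj_on a {1..k}
    \<and> (\<forall>i\<in>{1..k}. \<forall>j\<in>{1..k}. le i j \<longleftrightarrow> a i \<supseteq> a j)
    \<and> (\<forall>i\<in>{1..k}. \<forall>j\<in>{1..k}. i < j \<longleftrightarrow> colex_bar_less (a i) (a j))"
proof -
  define X where "X = var_positions u"
  define S where "S = (\<lambda>i. {\<alpha>\<in>{1..m}. i \<in> D \<alpha>})"
  define dn where "dn = (\<lambda>j. {y\<in>{1..k}. le y j})"
  have len: "length u = n" using u by (simp add: param_words_def)
  have Xdef: "X \<alpha> = {i\<in>{1..n}. u ! (i - 1) = Var \<alpha>}" for \<alpha>
    by (simp add: X_def var_positions_def len)
  have Xne: "X \<alpha> \<noteq> {}" if "\<alpha> \<in> {1..m}" for \<alpha>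
  proof -
    have "\<exists>i\<in>{1..n}. u ! (i - 1) = Var \<alpha>" using u that unfolding param_words_def by blast
    then show ?thesis unfolding Xdef by blast
  qed
  have Xfin: "finite (X \<alpha>)" for \<alpha> unfolding Xdef by auto
  have Xsub: "X \<alpha> \<subseteq> {1..n}" for \<alpha> unfolding Xdef by auto
  have Xdisj: "p \<in> X \<alpha> \<Longrightarrow> p \<in> X \<beta> \<Longrightarrow> \<alpha> = \<beta>" for p \<alpha> \<beta>
    unfolding Xdef by auto
  have Xmono: "Min (X \<alpha>) < Min (X \<beta>)" if "\<alpha> \<in> {1..m}" "\<beta> \<in> {1..m}" "\<alpha> < \<beta>" for \<alpha> \<beta>
  proof -
    have "\<forall>\<alpha> \<beta>. 1 \<le> \<alpha> \<and> \<alpha> < \<beta> \<and> \<beta> \<le> m \<longrightarrow>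
          Min {i\<in>{1..n}. u ! (i - 1) = Var \<alpha>} < Min {i\<in>{1..n}. u ! (i - 1) = Var \<beta>}"
      using u unfolding param_words_def by blast
    then show ?thesis using that unfolding Xdef by auto
  qed
  have adef: "a i = \<Union> (X ` S i)" for i
    unfolding a_def X_def S_def by auto
  have mem_a: "p \<in> a i \<longleftrightarrow> \<alpha> \<in> S i" if "p \<in> X \<alpha>" "\<alpha> \<in> {1..m}" for p \<alpha> i
    using that Xdisj unfolding adef S_def by blast
  have afin: "finite (a i)" for i
    unfolding adef using Xfin S_def by auto
  have asub: "a i \<subseteq> {1..n}" for i unfolding adef using Xsub by auto
  have refl: "\<And>x. x \<in> {1..k} \<Longrightarrow> le x x" and antis: "\<And>x y. x \<in> {1..k} \<Longrightarrow> y \<in> {1..k} \<Longrightarrow> le x y \<Longrightarrow> le y x \<Longrightarrow> x = y"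
    and trans: "\<And>x y z. x \<in> {1..k} \<Longrightarrow> y \<in> {1..k} \<Longrightarrow> z \<in> {1..k} \<Longrightarrow> le x y \<Longrightarrow> le y z \<Longrightarrow> le x z"
    using poset unfolding poset_on_def by blast+
  have Dds: "downset {1..k} le (D \<alpha>)" if "\<alpha> \<in> {1..m}" for \<alpha>
  proof -
    have "D \<alpha> \<in> D ` {1..m}" using that by blast
    then show ?thesis using enum unfolding bij_betw_def by auto
  qed
  have Dsurj: "\<exists>\<alpha>\<in>{1..m}. D \<alpha> = B" if "downset {1..k} le B" "B \<noteq> {}" for B
  proof -
    have "B \<in> D ` {1..m}" using enum that unfolding bij_betw_def by auto
    then show ?thesis by auto
  qed
  have Dinj: "inj_on D {1..m}" using enum unfolding bij_betw_def by auto
  have dn_ds: "downset {1..k} le (dn j)" if "j \<in> {1..k}" for j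
    unfolding downset_def dn_def using trans that by blast
  have dn_ne: "j \<in> dn j" if "j \<in> {1..k}" for j
    unfolding dn_def using refl that by auto
  have sup_S: "a j \<subseteq> a i \<longleftrightarrow> S j \<subseteq> S i" for i j
  proof
    assume h: "a j \<subseteq> a i"
    show "S j \<subseteq> S i"
    proof
      fix \<alpha> assume "\<alpha> \<in> S j"
      then have am: "\<alpha> \<in> {1..m}" unfolding S_def by auto
      then obtain p where p: "p \<in> X \<alpha>" using Xne by blast
      then have "p \<in> a j" using mem_a am \<open>\<alpha> \<in> S j\<close> by blast
      then have "p \<in> a i" using h by auto
      then show "\<alpha> \<in> S i" using mem_a am p by blast
    qed
  next
    assume "S j \<subseteq> S i" then show "a j \<subseteq> a i" unfolding adef by auto
  qed
  have le_S: "le i j \<longleftrightarrow> S j \<subseteq> S i" if ijk: "i \<in> {1..k}" "j \<in> {1..k}" for i j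
  proof
    assume "le i j"
    show "S j \<subseteq> S i"
    proof
      fix \<alpha> assume "\<alpha> \<in> S j"
      then have am: "\<alpha> \<in> {1..m}" and jd: "j \<in> D \<alpha>" unfolding S_def by auto
      have "\<forall>x\<in>D \<alpha>. \<forall>y\<in>{1..k}. le y x \<longrightarrow> y \<in> D \<alpha>" using Dds[OF am] unfolding downset_def by blast
      then have "i \<in> D \<alpha>" using jd ijk \<open>le i j\<close> by blast
      then show "\<alpha> \<in> S i" using am unfolding S_def by auto
    qed
  next
    assume h: "S j \<subseteq> S i"
    obtain \<alpha> where "\<alpha> \<in> {1..m}" "D \<alpha> = dn j" using Dsurj dn_ds dn_ne ijk by blast
    then have "\<alpha> \<in> S j" using dn_ne ijk unfolding S_def by auto
    then have "\<alpha> \<in> S i" using h by auto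
    then show "le i j" using \<open>D \<alpha> = dn j\<close> unfolding S_def dn_def by auto
  qed
  have P2: "\<forall>i\<in>{1..k}. \<forall>j\<in>{1..k}. le i j \<longleftrightarrow> a i \<supseteq> a j"
  proof (intro ballI)
    fix i j assume "i \<in> {1..k}" "j \<in> {1..k}"
    then show "le i j \<longleftrightarrow> a i \<supseteq> a j" using le_S[of i j] sup_S[of j i] by simp
  qed
  have P1: "inj_on a {1..k}"
  proof (rule inj_onI)
    fix i j assume "i \<in> {1..k}" "j \<in> {1..k}" "a i = a j"
    then show "i = j" using P2 antis[of i j] by simp
  qed
  have fwd: "colex_bar_less (a i) (a j)" if ij: "i \<in> {1..k}" "j \<in> {1..k}" "i < j" for i j
  proof (cases "le i j")
    case True
    then have "a j \<subseteq> a i" using P2 ij by simp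
    moreover have "a i \<noteq> a j" using P1 ij by (auto dest: inj_onD)
    ultimately show ?thesis unfolding colex_bar_less_def by auto
  next
    case False
    have nji: "\<not> le j i"
    proof
      assume "le j i"
      then have "j \<le> i" using linext ij by blast
      then show False using ij by simp
    qed
    have inc1: "\<not> a i \<subseteq> a j" using P2 ij nji by simp
    have inc2: "\<not> a j \<subseteq> a i" using P2 ij False by simp
    define T where "T = S i - S j"
    define U where "U = S j - S i"
    have Tne: "T \<noteq> {}" using nji le_S[of j i] ij unfolding T_def by auto
    have Une: "U \<noteq> {}" using False le_S[of i j] ij unfolding U_def by auto
    have Tfin: "finite T" "finite U" unfolding T_def U_def S_def by auto
    define \<alpha>0 where "\<alpha>0 = Min T"
    define \<beta>0 where "\<beta>0 = Min U"
    have a0T: "\<alpha>0 \<in> T" using Tne Tfin unfolding \<alpha>0_def by auto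
    have b0U: "\<beta>0 \<in> U" using Une Tfin unfolding \<beta>0_def by auto
    have a0m: "\<alpha>0 \<in> {1..m}" using a0T unfolding T_def S_def by auto
    have b0m: "\<beta>0 \<in> {1..m}" using b0U unfolding U_def S_def by auto
    have ab: "\<alpha>0 < \<beta>0"
    proof (rule ccontr)
      assume "\<not> \<alpha>0 < \<beta>0"
      moreover have "\<alpha>0 \<noteq> \<beta>0" using a0T b0U unfolding T_def U_def by auto
      ultimately have ba: "\<beta>0 < \<alpha>0" by auto
      define B where "B = D \<beta>0"
      have Bds: "downset {1..k} le B" using Dds b0m B_def by auto
      have jB: "j \<in> B" and iB: "i \<notin> B" using b0U unfolding B_def U_def S_def by auto
      define E where "E = {y\<in>B. \<not> le j y} \<union> dn i"
      have Eds: "downset {1..k} le E"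
        unfolding E_def downset_def
      proof (intro conjI ballI impI)
        show "{y \<in> B. \<not> le j y} \<union> dn i \<subseteq> {1..k}" using Bds unfolding downset_def dn_def by auto
      next
        fix x y assume x: "x \<in> {y \<in> B. \<not> le j y} \<union> dn i" and y: "y \<in> {1..k}" and "le y x"
        show "y \<in> {y \<in> B. \<not> le j y} \<union> dn i"
        proof (cases "x \<in> dn i")
          case True
          then show ?thesis using trans[of y x i] y \<open>le y x\<close> ij unfolding dn_def by auto
        next
          case F: False
          then have xB: "x \<in> B" "\<not> le j x" using x by auto
          have xk: "x \<in> {1..k}" using xB Bds unfolding downset_def by auto
          have "y \<in> B" using Bds xB y \<open>le y x\<close> unfolding downset_def by blast
          moreover have "\<not> le j y" using trans[of j y x] ij y xk \<open>le y x\<close> xB by auto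
          ultimately show ?thesis by auto
        qed
      qed
      have iE: "i \<in> E" using dn_ne ij unfolding E_def by auto
      have jE: "j \<notin> E" using refl ij nji unfolding E_def dn_def by auto
      obtain \<gamma> where g: "\<gamma> \<in> {1..m}" "D \<gamma> = E" using Dsurj Eds iE by blast
      have Bfin: "finite B" "finite E" using Bds Eds unfolding downset_def by (auto intro: finite_subset)
      have EB: "E - B \<noteq> {}" using iE iB by auto
      have BE: "B - E \<noteq> {}" using jB jE by auto
      have m1: "Max (E - B) \<le> i"
      proof -
        have "Max (E - B) \<in> E - B" using EB Bfin by (intro Max_in) auto
        then have "Max (E - B) \<in> dn i" unfolding E_def by auto
        then have "Max (E - B) \<in> {1..k}" "le (Max (E - B)) i" unfolding dn_def by auto
        then show ?thesis using linext ij by blast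
      qed
      have m2: "j \<le> Max (B - E)" using jB jE Bfin by (intro Max_ge) auto
      have "\<not> E \<subseteq> B" "\<not> B \<subseteq> E" using EB BE by auto
      moreover have "Max (E - B) < Max (B - E)" using m1 m2 ij by simp
      ultimately have "alex_less E B" unfolding alex_less_def by blast
      then have "\<gamma> < \<beta>0"
      proof -
        assume al: "alex_less E B"
        have "\<gamma> \<noteq> \<beta>0"
        proof
          assume "\<gamma> = \<beta>0" then have "E = B" using g B_def by simp
          then show False using al unfolding alex_less_def by simp
        qed
        moreover have "\<not> \<beta>0 < \<gamma>"
        proof
          assume "\<beta>0 < \<gamma>"
          then have "alex_less (D \<beta>0) (D \<gamma>)" using sorted g(1) b0m by blast
          then have "alex_less B E" using g(2) B_def by simp
          then show False using al alex_asym by blast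
        qed
        ultimately show ?thesis by auto
      qed
      moreover have "\<gamma> \<in> T" using g iE jE unfolding T_def S_def by auto
      then have "\<alpha>0 \<le> \<gamma>" using Tfin unfolding \<alpha>0_def by auto
      ultimately show False using ba by auto
    qed
    define p where "p = Min (X \<alpha>0)"
    have p: "p \<in> X \<alpha>0" using Xne[OF a0m] Xfin unfolding p_def by (intro Min_in) auto
    have pa: "p \<in> a i - a j" using mem_a[OF p a0m] a0T unfolding T_def by auto
    have m1: "Min (a i - a j) \<le> p" using pa afin by (intro Min_le) auto
    have p_le: "Min (X \<alpha>0) \<le> p" using p Xfin by auto
    have ne2: "a j - a i \<noteq> {}" using inc2 by auto
    define q where "q = Min (a j - a i)"
    have q: "q \<in> a j - a i" using ne2 afin unfolding q_def by (intro Min_in) auto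
    then obtain \<beta> where qb: "q \<in> X \<beta>" "\<beta> \<in> S j" unfolding adef by auto
    have bm: "\<beta> \<in> {1..m}" using qb unfolding S_def by auto
    have "\<beta> \<notin> S i" using mem_a[OF qb(1) bm] q by auto
    then have "\<beta> \<in> U" using qb unfolding U_def by auto
    then have "\<beta>0 \<le> \<beta>" using Tfin unfolding \<beta>0_def by auto
    then have "\<alpha>0 < \<beta>" using ab by auto
    then have "Min (X \<alpha>0) < Min (X \<beta>)" using Xmono a0m bm by auto
    moreover have "Min (X \<beta>) \<le> q" using qb Xfin by auto
    ultimately have "Min (X \<alpha>0) < q" by auto
    then have "p < q" unfolding p_def .
    then show ?thesis unfolding colex_bar_less_def using m1 inc1 inc2 q_def by auto
  qed
  have P3: "\<forall>i\<in>{1..k}. \<forall>j\<in>{1..k}. i < j \<longleftrightarrow> colex_bar_less (a i) (a j)"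
  proof (intro ballI iffI)
    fix i j assume "i \<in> {1..k}" "j \<in> {1..k}" "i < j" then show "colex_bar_less (a i) (a j)" using fwd by blast
  next
    fix i j assume ij: "i \<in> {1..k}" "j \<in> {1..k}" and c: "colex_bar_less (a i) (a j)"
    show "i < j"
    proof (rule ccontr)
      assume "\<not> i < j"
      then have "j < i \<or> j = i" by auto
      then show False
      proof
        assume "j < i" then show False using fwd ij c colex_asym by blast
      next
        assume "j = i" then show False using c unfolding colex_bar_less_def by auto
      qed
    qed
  qed
  show ?thesis using P1 P2 P3 by blast
qed

end
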